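(* Let $\sigma:\mathbb{R}\to\mathbb{R}$ be an increasing odd homeomorphism. The union of all $\sigma$-rational lines is dense in $\mathbb{R}^2$.
   Context: $h_\sigma(x,y)=(x+\sigma^{-1}(y),y)$, $v_\sigma(x,y)=(x,\sigma(x)+y)$. The $\sigma$-rational lines are: the axes $Ox=\mathbb{R}\times\{0\}$ and $Oy=\{0\}\times\mathbb{R}$; the sets $m(Ox)$ with $m$ in the monoid (containing the identity) generated by $h_\sigma,v_\sigma$; and the sets $m(Oy)$ with $m$ in the monoid generated by $h_\sigma^{-1},v_\sigma^{-1}$. *)

theory Defs
  imports "HOL-Analysis.Analysis"
begin

definition h_sig :: "(real \<Rightarrow> real) \<Rightarrow> real \<times> real \<Rightarrow> real \<times> real" where
  "h_sig \<sigma> = (\<lambda>(x, y). (x + inv \<sigma> y, y))"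

definition v_sig :: "(real \<Rightarrow> real) \<Rightarrow> real \<times> real \<Rightarrow> real \<times> real" where
  "v_sig \<sigma> = (\<lambda>(x, y). (x, \<sigma> x + y))"

inductive_set monoid_gen :: "('a \<Rightarrow> 'a) set \<Rightarrow> ('a \<Rightarrow> 'a) set" for G where
  gen_id: "id \<in> monoid_gen G"
| gen_step: "g \<in> G \<Longrightarrow> m \<in> monoid_gen G \<Longrightarrow> g \<circ> m \<in> monoid_gen G"

definition axis_x :: "(real \<times> real) set" where "axis_x = UNIV \<times> {0}"
definition axis_y :: "(real \<times> real) set" where "axis_y = {0} \<times> UNIV"

definition rational_lines :: "(real \<Rightarrow> real) \<Rightarrow> (real \<times> real) set set" where
  "rational_lines \<sigma> =
     {axis_x, axis_y}
     \<union> {m ` axis_x | m. m \<in> monoid_gen {h_sig \<sigma>, v_sig \<sigma>}}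
     \<union> {m ` axis_y | m. m \<in> monoid_gen {inv (h_sig \<sigma>), inv (v_sig \<sigma>)}}"

end

theory Submission
  imports Defs
begin

lemma mg_gen: "g \<in> G \<Longrightarrow> g \<in> monoid_gen G"
  using gen_step[OF _ gen_id, of g G] by simp

lemma mg_comp: "m1 \<in> monoid_gen G \<Longrightarrow> m2 \<in> monoid_gen G \<Longrightarrow> m1 \<circ> m2 \<in> monoid_gen G"
proof (induction m1 rule: monoid_gen.induct)
  case gen_id
  then show ?case by simp
next
  case (gen_step g m)
  then show ?case using monoid_gen.gen_step[of g G "m \<circ> m2"] by (metis comp_assoc)
qed

lemma mg_conj:
  assumes SS: "\<And>x. S (S x) = x" and A: "\<And>g. g \<in> A \<Longrightarrow> S \<circ> g \<circ> S \<in> monoid_gen B"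
    and m: "m \<in> monoid_gen A"
  shows "S \<circ> m \<circ> S \<in> monoid_gen B"
  using m
proof (induction m rule: monoid_gen.induct)
  case gen_id
  have "S \<circ> id \<circ> S = id" using SS by (simp add: fun_eq_iff)
  then show ?case by (metis monoid_gen.gen_id)
next
  case (gen_step g m)
  have "S \<circ> (g \<circ> m) \<circ> S = (S \<circ> g \<circ> S) \<circ> (S \<circ> m \<circ> S)" using SS by (simp add: fun_eq_iff)
  then show ?case using mg_comp[OF A[OF gen_step(1)] gen_step(3)] by metis
qed

context
  fixes \<sigma> :: "real \<Rightarrow> real"
  assumes smono: "strict_mono \<sigma>"
    and sodd: "\<And>x. \<sigma> (- x) = - \<sigma> x"
    and shom: "homeomorphism UNIV UNIV \<sigma> (inv \<sigma>)"
begin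

lemma si_s[simp]: "inv \<sigma> (\<sigma> x) = x"
  using shom unfolding homeomorphism_def by auto

lemma s_si[simp]: "\<sigma> (inv \<sigma> y) = y"
  using shom unfolding homeomorphism_def by auto

lemma cont_s: "continuous_on UNIV \<sigma>"
  using shom unfolding homeomorphism_def by auto

lemma cont_si: "continuous_on UNIV (inv \<sigma>)"
  using shom unfolding homeomorphism_def by auto

lemma s_le[simp]: "\<sigma> x \<le> \<sigma> y \<longleftrightarrow> x \<le> y"
  using smono by (simp add: strict_mono_less_eq)

lemma s_less[simp]: "\<sigma> x < \<sigma> y \<longleftrightarrow> x < y"
  using smono by (simp add: strict_mono_less)

lemma si_le[simp]: "inv \<sigma> x \<le> inv \<sigma> y \<longleftrightarrow> x \<le> y"
  using s_le[of "inv \<sigma> x" "inv \<sigma> y"] by simp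

lemma si_less[simp]: "inv \<sigma> x < inv \<sigma> y \<longleftrightarrow> x < y"
  using s_less[of "inv \<sigma> x" "inv \<sigma> y"] by simp

lemma s0[simp]: "\<sigma> 0 = 0"
  using sodd[of 0] by simp

lemma si0[simp]: "inv \<sigma> 0 = 0"
  using si_s[of 0] by simp

lemma si_odd: "inv \<sigma> (- y) = - inv \<sigma> y"
proof -
  have "inv \<sigma> (- y) = inv \<sigma> (\<sigma> (- inv \<sigma> y))" by (simp add: sodd)
  then show ?thesis by simp
qed

lemma h_app[simp]: "h_sig \<sigma> (x, y) = (x + inv \<sigma> y, y)"
  by (simp add: h_sig_def)

lemma v_app[simp]: "v_sig \<sigma> (x, y) = (x, \<sigma> x + y)"
  by (simp add: v_sig_def)

lemma inv_h: "inv (h_sig \<sigma>) = (\<lambda>(x, y). (x - inv \<sigma> y, y))"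
  by (rule inv_unique_comp) (auto simp: fun_eq_iff)

lemma inv_v: "inv (v_sig \<sigma>) = (\<lambda>(x, y). (x, y - \<sigma> x))"
  by (rule inv_unique_comp) (auto simp: fun_eq_iff)

lemma core:
  assumes a: "a > 0" and b: "b > 0" and e: "e > 0"
  shows "\<exists>m\<in>monoid_gen {h_sig \<sigma>, v_sig \<sigma>}. \<exists>x. dist (a, b) (m (x, \<sigma> x)) < e"
proof (rule ccontr)
  assume nc: "\<not> ?thesis"
  define d where "d = e / 2"
  have d: "d > 0" using e by (simp add: d_def)
  define seg where "seg = (\<lambda>t::real. (a + t * d, b))"
  define M where "M = monoid_gen {h_sig \<sigma>, v_sig \<sigma>}"
  define valid where "valid = (\<lambda>m f. m \<in> M \<and> continuous_on {0..1} f \<and>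
      (\<forall>t\<in>{0..1}. fst (f t) > 0 \<and> snd (f t) > 0 \<and> m (f t) = seg t) \<and>
      fst (f 1) \<ge> fst (f 0) + d \<and> snd (f 1) \<le> snd (f (0::real)))"
  have avoid: "m (x, \<sigma> x) \<noteq> seg t" if "m \<in> M" "t \<in> {0..1}" for m x t
  proof
    assume eq: "m (x, \<sigma> x) = seg t"
    have "dist (a, b) (seg t) = t * d"
      using that d by (simp add: seg_def dist_Pair_Pair dist_real_def)
    also have "\<dots> \<le> d" using that d by (simp add: mult_left_le_one_le)
    also have "\<dots> < e" using e by (simp add: d_def)
    finally show False using nc eq that(1) unfolding M_def by metis
  qed
  have cs: "continuous_on S (\<lambda>t. \<sigma> (g t))" if "continuous_on S g" for S g
    using continuous_on_compose2[OF cont_s that] by simp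
  have csi: "continuous_on S (\<lambda>t. inv \<sigma> (g t))" if "continuous_on S g" for S g
    using continuous_on_compose2[OF cont_si that] by simp
  have step: "(\<exists>m' f'. valid m' f' \<and> snd (f' 1) \<le> snd (f 1) - \<sigma> d) \<or>
      (\<exists>m' f'. valid m' f' \<and> snd (f' 1) = snd (f 1) \<and> fst (f' 0) \<le> fst (f 0) - inv \<sigma> (snd (f 1)))"
    if V: "valid m f" for m f
  proof -
    have mM: "m \<in> M" and fc: "continuous_on {0..1} f"
      and fpos: "\<And>t. t \<in> {0..1} \<Longrightarrow> fst (f t) > 0 \<and> snd (f t) > 0 \<and> m (f t) = seg t"
      and e1: "fst (f 1) \<ge> fst (f 0) + d" and e2: "snd (f 1) \<le> snd (f 0)"
      using V unfolding valid_def by auto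
    define g where "g t = snd (f t) - \<sigma> (fst (f t))" for t
    have gc: "continuous_on {0..1} g"
      unfolding g_def by (intro continuous_intros cs fc)
    have gnz: "g t \<noteq> 0" if "t \<in> {0..1}" for t
    proof
      assume "g t = 0"
      then have "f t = (fst (f t), \<sigma> (fst (f t)))" unfolding g_def by (simp add: prod_eq_iff)
      then have "m (fst (f t), \<sigma> (fst (f t))) = seg t" using fpos[OF that] by metis
      then show False using avoid[OF mM that] by blast
    qed
    have sign: "(\<forall>t\<in>{0..1}. g t > 0) \<or> (\<forall>t\<in>{0..1}. g t < 0)"
    proof (cases "g 0 > 0")
      case True
      have "g t > 0" if t: "t \<in> {0..1}" for t
      proof (rule ccontr)
        assume "\<not> g t > 0"
        then have "g t \<le> 0" by simp
        moreover have "continuous_on {0..t} g" using t by (intro continuous_on_subset[OF gc]) auto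
        ultimately obtain s where "0 \<le> s" "s \<le> t" "g s = 0"
          using IVT2'[of g t 0 0] True t by auto
        then show False using gnz[of s] t by auto
      qed
      then show ?thesis by auto
    next
      case False
      then have g0: "g 0 < 0" using gnz[of 0] by force
      have "g t < 0" if t: "t \<in> {0..1}" for t
      proof (rule ccontr)
        assume "\<not> g t < 0"
        then have "g t \<ge> 0" by simp
        moreover have "continuous_on {0..t} g" using t by (intro continuous_on_subset[OF gc]) auto
        ultimately obtain s where "0 \<le> s" "s \<le> t" "g s = 0"
          using IVT'[of g 0 0 t] g0 t by auto
        then show False using gnz[of s] t by auto
      qed
      then show ?thesis by auto
    qed
    have f0: "fst (f 0) > 0" "snd (f 0) > 0" and f1: "fst (f 1) > 0" "snd (f 1) > 0"
      using fpos[of 0] fpos[of 1] by auto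
    from sign show ?thesis
    proof
      assume pos: "\<forall>t\<in>{0..1}. g t > 0"
      define f' where "f' t = (fst (f t), snd (f t) - \<sigma> (fst (f t)))" for t
      define m' where "m' = m \<circ> v_sig \<sigma>"
      have "m' \<in> M" unfolding m'_def M_def using mg_comp[OF mM[unfolded M_def] mg_gen[of "v_sig \<sigma>"]] by simp
      moreover have "continuous_on {0..1} f'"
        unfolding f'_def by (intro continuous_intros cs fc)
      moreover have "\<forall>t\<in>{0..1}. fst (f' t) > 0 \<and> snd (f' t) > 0 \<and> m' (f' t) = seg t"
      proof
        fix t :: real assume t: "t \<in> {0..1}"
        have "v_sig \<sigma> (f' t) = f t" by (simp add: f'_def)
        then show "fst (f' t) > 0 \<and> snd (f' t) > 0 \<and> m' (f' t) = seg t"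
          using fpos[OF t] pos t by (simp add: f'_def m'_def g_def)
      qed
      moreover have "fst (f' 1) \<ge> fst (f' 0) + d" using e1 by (simp add: f'_def)
      moreover have "snd (f' 1) \<le> snd (f' 0)"
      proof -
        have "\<sigma> (fst (f 0)) \<le> \<sigma> (fst (f 1))" using e1 d by simp
        then show ?thesis using e2 by (simp add: f'_def del: s_le)
      qed
      moreover have "snd (f' 1) \<le> snd (f 1) - \<sigma> d"
      proof -
        have "\<sigma> d \<le> \<sigma> (fst (f 1))" using e1 f0 by simp
        then show ?thesis by (simp add: f'_def)
      qed
      ultimately show ?thesis unfolding valid_def by blast
    next
      assume neg: "\<forall>t\<in>{0..1}. g t < 0"
      define f' where "f' t = (fst (f t) - inv \<sigma> (snd (f t)), snd (f t))" for t
      define m' where "m' = m \<circ> h_sig \<sigma>"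
      have "m' \<in> M" unfolding m'_def M_def using mg_comp[OF mM[unfolded M_def] mg_gen[of "h_sig \<sigma>"]] by simp
      moreover have "continuous_on {0..1} f'"
        unfolding f'_def by (intro continuous_intros csi fc)
      moreover have "\<forall>t\<in>{0..1}. fst (f' t) > 0 \<and> snd (f' t) > 0 \<and> m' (f' t) = seg t"
      proof
        fix t :: real assume t: "t \<in> {0..1}"
        have "h_sig \<sigma> (f' t) = f t" by (simp add: f'_def)
        moreover have "inv \<sigma> (snd (f t)) < fst (f t)"
        proof -
          have "snd (f t) < \<sigma> (fst (f t))" using neg t by (simp add: g_def)
          then have "inv \<sigma> (snd (f t)) < inv \<sigma> (\<sigma> (fst (f t)))" by (simp only: si_less)
          then show ?thesis by simp
        qed
        ultimately show "fst (f' t) > 0 \<and> snd (f' t) > 0 \<and> m' (f' t) = seg t"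
          using fpos[OF t] t by (simp add: f'_def m'_def)
      qed
      moreover have "fst (f' 1) \<ge> fst (f' 0) + d"
      proof -
        have "inv \<sigma> (snd (f 1)) \<le> inv \<sigma> (snd (f 0))" using e2 by simp
        then show ?thesis using e1 by (simp add: f'_def del: si_le)
      qed
      moreover have "snd (f' 1) \<le> snd (f' 0)" using e2 by (simp add: f'_def)
      moreover have "snd (f' 1) = snd (f 1)" by (simp add: f'_def)
      moreover have "fst (f' 0) \<le> fst (f 0) - inv \<sigma> (snd (f 1))"
      proof -
        have "inv \<sigma> (snd (f 1)) \<le> inv \<sigma> (snd (f 0))" using e2 by simp
        then show ?thesis by (simp add: f'_def del: si_le)
      qed
      ultimately show ?thesis unfolding valid_def by blast
    qed
  qed
  have c: "\<sigma> d > 0" using d s_less[of 0 d] by simp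
  have main: "\<forall>m f. valid m f \<longrightarrow> snd (f 1) < real k * \<sigma> d \<longrightarrow> False" for k
  proof (induction k)
    case 0
    show ?case
    proof (intro allI impI)
      fix m f assume V: "valid m f" and y: "snd (f 1) < real 0 * \<sigma> d"
      have "snd (f 1) > 0" using V unfolding valid_def by auto
      then show False using y by simp
    qed
  next
    case (Suc k)
    note outer = Suc.IH
    have inner: "\<forall>m f. valid m f \<longrightarrow> snd (f 1) = Y \<longrightarrow> fst (f 0) < real j * inv \<sigma> Y \<longrightarrow> False"
      if Y: "Y < real (Suc k) * \<sigma> d" for Y j
    proof (induction j)
      case 0
      show ?case
      proof (intro allI impI)
        fix m f assume V: "valid m f" and y: "fst (f 0) < real 0 * inv \<sigma> Y"
        have "fst (f 0) > 0" using V unfolding valid_def by auto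
        then show False using y by simp
      qed
    next
      case (Suc j)
      show ?case
      proof (intro allI impI)
        fix m f assume V: "valid m f" and y: "snd (f 1) = Y" and x: "fst (f 0) < real (Suc j) * inv \<sigma> Y"
        from step[OF V] show False
        proof
          assume "\<exists>m' f'. valid m' f' \<and> snd (f' 1) \<le> snd (f 1) - \<sigma> d"
          then obtain m' f' where "valid m' f'" "snd (f' 1) \<le> snd (f 1) - \<sigma> d" by blast
          moreover have "snd (f 1) - \<sigma> d < real k * \<sigma> d" using Y y by (simp add: algebra_simps)
          ultimately show False using outer by force
        next
          assume "\<exists>m' f'. valid m' f' \<and> snd (f' 1) = snd (f 1) \<and> fst (f' 0) \<le> fst (f 0) - inv \<sigma> (snd (f 1))"
          then obtain m' f' where "valid m' f'" "snd (f' 1) = Y" "fst (f' 0) \<le> fst (f 0) - inv \<sigma> Y"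
            using y by blast
          moreover have "fst (f 0) - inv \<sigma> Y < real j * inv \<sigma> Y" using x by (simp add: algebra_simps)
          ultimately show False using Suc.IH by force
        qed
      qed
    qed
    show ?case
    proof (intro allI impI)
      fix m f assume V: "valid m f" and y: "snd (f 1) < real (Suc k) * \<sigma> d"
      have "snd (f 1) > 0" using V unfolding valid_def by auto
      then have "inv \<sigma> (snd (f 1)) > 0" using si_less[of 0 "snd (f 1)"] by simp
      then obtain j where "fst (f 0) < real j * inv \<sigma> (snd (f 1))"
        using ex_less_of_nat_mult by blast
      then show False using inner[OF y, of j] V by blast
    qed
  qed
  have "valid id seg"
    unfolding valid_def M_def seg_def using a b d
    by (auto intro!: continuous_intros monoid_gen.gen_id simp: mult_nonneg_nonneg add_pos_nonneg)
  moreover obtain k where "b < real k * \<sigma> d" using ex_less_of_nat_mult c by blast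
  ultimately show False using main[of k] unfolding seg_def by force
qed

lemma inMp: "m \<in> monoid_gen {h_sig \<sigma>, v_sig \<sigma>} \<Longrightarrow> z \<in> axis_x \<Longrightarrow> m z \<in> \<Union> (rational_lines \<sigma>)"
proof -
  assume m: "m \<in> monoid_gen {h_sig \<sigma>, v_sig \<sigma>}" and z: "z \<in> axis_x"
  have "m ` axis_x \<in> rational_lines \<sigma>" unfolding rational_lines_def using m by blast
  then show ?thesis using z by blast
qed

lemma inMm: "m \<in> monoid_gen {inv (h_sig \<sigma>), inv (v_sig \<sigma>)} \<Longrightarrow> z \<in> axis_y \<Longrightarrow> m z \<in> \<Union> (rational_lines \<sigma>)"
proof -
  assume m: "m \<in> monoid_gen {inv (h_sig \<sigma>), inv (v_sig \<sigma>)}" and z: "z \<in> axis_y"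
  have "m ` axis_y \<in> rational_lines \<sigma>" unfolding rational_lines_def using m by blast
  then show ?thesis using z by blast
qed

lemma conjN: "m \<in> monoid_gen {h_sig \<sigma>, v_sig \<sigma>} \<Longrightarrow>
   (\<lambda>p::real\<times>real. - p) \<circ> m \<circ> (\<lambda>p. - p) \<in> monoid_gen {h_sig \<sigma>, v_sig \<sigma>}"
proof (rule mg_conj)
  fix g assume g: "g \<in> {h_sig \<sigma>, v_sig \<sigma>}"
  have 1: "(\<lambda>p::real\<times>real. - p) \<circ> h_sig \<sigma> \<circ> (\<lambda>p. - p) = h_sig \<sigma>"
    by (simp add: fun_eq_iff split_paired_All si_odd)
  have 2: "(\<lambda>p::real\<times>real. - p) \<circ> v_sig \<sigma> \<circ> (\<lambda>p. - p) = v_sig \<sigma>"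
    by (simp add: fun_eq_iff split_paired_All sodd)
  from g have "g = h_sig \<sigma> \<or> g = v_sig \<sigma>" by simp
  then show "(\<lambda>p::real\<times>real. - p) \<circ> g \<circ> (\<lambda>p. - p) \<in> monoid_gen {h_sig \<sigma>, v_sig \<sigma>}"
    using 1 2 mg_gen[of "h_sig \<sigma>" "{h_sig \<sigma>, v_sig \<sigma>}"] mg_gen[of "v_sig \<sigma>" "{h_sig \<sigma>, v_sig \<sigma>}"]
    by (metis insertCI)
qed simp

definition Rf :: "real \<times> real \<Rightarrow> real \<times> real" where "Rf = (\<lambda>(x, y). (- x, y))"
definition Tf :: "real \<times> real \<Rightarrow> real \<times> real" where "Tf = (\<lambda>(x, y). (x, - y))"

lemma conjR: "m \<in> monoid_gen {h_sig \<sigma>, v_sig \<sigma>} \<Longrightarrow>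
   Rf \<circ> m \<circ> Rf \<in> monoid_gen {inv (h_sig \<sigma>), inv (v_sig \<sigma>)}"
proof (rule mg_conj)
  fix g assume g: "g \<in> {h_sig \<sigma>, v_sig \<sigma>}"
  have 1: "Rf \<circ> h_sig \<sigma> \<circ> Rf = inv (h_sig \<sigma>)"
    by (simp add: fun_eq_iff split_paired_All Rf_def inv_h)
  have 2: "Rf \<circ> v_sig \<sigma> \<circ> Rf = inv (v_sig \<sigma>)"
    by (simp add: fun_eq_iff split_paired_All sodd Rf_def inv_v)
  from g have "g = h_sig \<sigma> \<or> g = v_sig \<sigma>" by simp
  then show "Rf \<circ> g \<circ> Rf \<in> monoid_gen {inv (h_sig \<sigma>), inv (v_sig \<sigma>)}"
    using 1 2 mg_gen[of "inv (h_sig \<sigma>)" "{inv (h_sig \<sigma>), inv (v_sig \<sigma>)}"]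
      mg_gen[of "inv (v_sig \<sigma>)" "{inv (h_sig \<sigma>), inv (v_sig \<sigma>)}"]
    by (metis insertCI)
qed (simp add: Rf_def split_paired_all)

lemma conjT: "m \<in> monoid_gen {h_sig \<sigma>, v_sig \<sigma>} \<Longrightarrow>
   Tf \<circ> m \<circ> Tf \<in> monoid_gen {inv (h_sig \<sigma>), inv (v_sig \<sigma>)}"
proof (rule mg_conj)
  fix g assume g: "g \<in> {h_sig \<sigma>, v_sig \<sigma>}"
  have 1: "Tf \<circ> h_sig \<sigma> \<circ> Tf = inv (h_sig \<sigma>)"
    by (simp add: fun_eq_iff split_paired_All Tf_def inv_h si_odd)
  have 2: "Tf \<circ> v_sig \<sigma> \<circ> Tf = inv (v_sig \<sigma>)"
    by (simp add: fun_eq_iff split_paired_All sodd Tf_def inv_v)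
  from g have "g = h_sig \<sigma> \<or> g = v_sig \<sigma>" by simp
  then show "Tf \<circ> g \<circ> Tf \<in> monoid_gen {inv (h_sig \<sigma>), inv (v_sig \<sigma>)}"
    using 1 2 mg_gen[of "inv (h_sig \<sigma>)" "{inv (h_sig \<sigma>), inv (v_sig \<sigma>)}"]
      mg_gen[of "inv (v_sig \<sigma>)" "{inv (h_sig \<sigma>), inv (v_sig \<sigma>)}"]
    by (metis insertCI)
qed (simp add: Tf_def split_paired_all)

lemma distR: "dist (Rf p) (Rf q) = dist p q"
  by (cases p; cases q) (simp add: Rf_def dist_Pair_Pair dist_real_def abs_minus_commute)

lemma distT: "dist (Tf p) (Tf q) = dist p q"
  by (cases p; cases q) (simp add: Tf_def dist_Pair_Pair dist_real_def abs_minus_commute)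

lemma approx:
  assumes e: "e > 0"
  shows "\<exists>y\<in>\<Union> (rational_lines \<sigma>). dist y (a, b) < e"
proof -
  let ?U = "\<Union> (rational_lines \<sigma>)"
  let ?Mp = "monoid_gen {h_sig \<sigma>, v_sig \<sigma>}"
  let ?Mm = "monoid_gen {inv (h_sig \<sigma>), inv (v_sig \<sigma>)}"
  have vx: "v_sig \<sigma> (x, 0) = (x, \<sigma> x)" for x by simp
  consider "a = 0" | "b = 0" | "a > 0" "b > 0" | "a < 0" "b < 0" | "a < 0" "b > 0" | "a > 0" "b < 0"
    by linarith
  then show ?thesis
  proof cases
    case 1
    have "(a, b) \<in> ?U" unfolding rational_lines_def axis_y_def using 1 by blast
    then show ?thesis using e by force
  next
    case 2
    have "(a, b) \<in> ?U" unfolding rational_lines_def axis_x_def using 2 by blast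
    then show ?thesis using e by force
  next
    case 3
    obtain m x where m: "m \<in> ?Mp" and d: "dist (a, b) (m (x, \<sigma> x)) < e"
      using core[OF 3 e] by blast
    have "(m \<circ> v_sig \<sigma>) (x, 0) \<in> ?U"
      by (rule inMp[of "m \<circ> v_sig \<sigma>" "(x, 0)", OF mg_comp[OF m mg_gen]]) (auto simp: axis_x_def)
    moreover have "(m \<circ> v_sig \<sigma>) (x, 0) = m (x, \<sigma> x)" by simp
    ultimately show ?thesis using d by (metis dist_commute)
  next
    case 4
    obtain m x where m: "m \<in> ?Mp" and d: "dist (- a, - b) (m (x, \<sigma> x)) < e"
      using core[of "- a" "- b" e] 4 e by auto
    let ?m2 = "(\<lambda>p::real\<times>real. - p) \<circ> m \<circ> (\<lambda>p. - p)"
    have "(?m2 \<circ> v_sig \<sigma>) (- x, 0) \<in> ?U"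
      by (rule inMp[of "?m2 \<circ> v_sig \<sigma>" "(- x, 0)", OF mg_comp[OF conjN[OF m] mg_gen]]) (auto simp: axis_x_def)
    moreover have "(?m2 \<circ> v_sig \<sigma>) (- x, 0) = - m (x, \<sigma> x)" by (simp add: sodd)
    moreover have "dist (- m (x, \<sigma> x)) (a, b) = dist (- a, - b) (m (x, \<sigma> x))"
      using dist_minus[of "m (x, \<sigma> x)" "(- a, - b)"] by (simp add: dist_commute)
    ultimately show ?thesis using d by metis
  next
    case 5
    obtain m x where m: "m \<in> ?Mp" and d: "dist (- a, b) (m (x, \<sigma> x)) < e"
      using core[of "- a" b e] 5 e by auto
    let ?m2 = "Rf \<circ> m \<circ> Rf"
    have "(?m2 \<circ> inv (h_sig \<sigma>)) (0, \<sigma> x) \<in> ?U"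
      by (rule inMm[of "?m2 \<circ> inv (h_sig \<sigma>)" "(0, \<sigma> x)", OF mg_comp[OF conjR[OF m] mg_gen]]) (auto simp: axis_y_def)
    moreover have "(?m2 \<circ> inv (h_sig \<sigma>)) (0, \<sigma> x) = Rf (m (x, \<sigma> x))" by (simp add: inv_h Rf_def)
    moreover have "dist (Rf (m (x, \<sigma> x))) (a, b) = dist (- a, b) (m (x, \<sigma> x))"
      using distR[of "m (x, \<sigma> x)" "(- a, b)"] by (simp add: dist_commute Rf_def)
    ultimately show ?thesis using d by metis
  next
    case 6
    obtain m x where m: "m \<in> ?Mp" and d: "dist (a, - b) (m (x, \<sigma> x)) < e"
      using core[of a "- b" e] 6 e by auto
    let ?m2 = "Tf \<circ> m \<circ> Tf"
    have "(?m2 \<circ> inv (h_sig \<sigma>)) (0, - \<sigma> x) \<in> ?U"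
      by (rule inMm[of "?m2 \<circ> inv (h_sig \<sigma>)" "(0, - \<sigma> x)", OF mg_comp[OF conjT[OF m] mg_gen]]) (auto simp: axis_y_def)
    moreover have "(?m2 \<circ> inv (h_sig \<sigma>)) (0, - \<sigma> x) = Tf (m (x, \<sigma> x))" by (simp add: inv_h Tf_def si_odd)
    moreover have "dist (Tf (m (x, \<sigma> x))) (a, b) = dist (a, - b) (m (x, \<sigma> x))"
      using distT[of "m (x, \<sigma> x)" "(a, - b)"] by (simp add: dist_commute Tf_def)
    ultimately show ?thesis using d by metis
  qed
qed

end

theorem proposition3:
  fixes \<sigma> :: "real \<Rightarrow> real"
  assumes "strict_mono \<sigma>"
    and "\<And>x. \<sigma> (- x) = - \<sigma> x"
    and "homeomorphism UNIV UNIV \<sigma> (inv \<sigma>)"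
  shows "closure (\<Union> (rational_lines \<sigma>)) = UNIV"
proof -
  have "p \<in> closure (\<Union> (rational_lines \<sigma>))" for p
    using approx[OF assms, of _ "fst p" "snd p"] unfolding closure_approachable by simp
  then show ?thesis by blast
qed

end
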